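(* Let $\mu, \nu$ be compactly supported probability measures on $\mathbb{R}$, and suppose there is a function $H_{\mu,\nu} \in L^2(\mu)$ such that $(\mu\otimes\nu)[\partial f] = \int H_{\mu,\nu} f\, d\mu$ for every polynomial $f$. Then for all polynomials $f, g$, \[ \int \bigl(L_\nu[L_\mu[f]] - H_{\mu,\nu} L_\mu[f]\bigr)\, g \, d\mu = -\int L_\mu[f]\, L_\mu[g]\, d\nu , \] so in particular the operator $L_\nu L_\mu - H_{\mu,\nu} L_\mu$ is symmetric with respect to the inner product of $L^2(\mu)$ on polynomials.
   Context: For a polynomial $f$, $(\partial f)(x,y) = \frac{f(x)-f(y)}{x-y}$ (a polynomial in two variables), $(\mu\otimes\nu)[F] = \iint F(x,y)\,d\mu(x)\,d\nu(y)$, and $L_\mu[f](x) = \int \frac{f(x)-f(y)}{x-y}\,d\mu(y)$. The function $H_{\mu,\nu}$ is called the c-free conjugate variable of the pair $(\mu,\nu)$. *)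

theory Defs
  imports "HOL-Analysis.Analysis" "HOL-Probability.Probability"
    "HOL-Computational_Algebra.Polynomial"
begin

text \<open>Divided difference of a (polynomial) function g: the value of the
  two-variable polynomial (g x - g y)/(x - y); on the diagonal it equals g'(x).\<close>
definition ddiff :: "(real \<Rightarrow> real) \<Rightarrow> real \<Rightarrow> real \<Rightarrow> real" where
  "ddiff g x y = (if x = y then deriv g x else (g x - g y) / (x - y))"

definition Lop :: "real measure \<Rightarrow> (real \<Rightarrow> real) \<Rightarrow> real \<Rightarrow> real" where
  "Lop \<mu> g x = (\<integral>y. ddiff g x y \<partial>\<mu>)"

definition compact_support :: "real measure \<Rightarrow> bool" where
  "compact_support \<mu> \<longleftrightarrow> (\<exists>K. compact K \<and> emeasure \<mu> (UNIV - K) = 0)"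

end

theory Submission
  imports Defs
begin


lemma ddiff_sym: "ddiff g x y = ddiff g y x"
proof -
  have "(g x - g y)/(x-y) = (g y - g x)/(y-x)"
    by (metis minus_diff_eq minus_divide_divide)
  then show ?thesis unfolding ddiff_def by auto
qed

lemma ddiff_cross: "ddiff F x y * (g x - g y) = (F x - F y) * ddiff g x y"
  unfolding ddiff_def by auto

lemma sum_pow_diag: "(\<Sum>i<k. (x::real)^i * x^(k - Suc i)) = of_nat k * x^(k - Suc 0)"
proof -
  have "(\<Sum>i<k. x^i * x^(k - Suc i)) = (\<Sum>i<k. x^(k-1))"
    by (rule sum.cong) (auto simp flip: power_add)
  then show ?thesis by simp
qed

lemma ddiff_poly:
  "ddiff (poly p) x y = (\<Sum>k\<le>degree p. coeff p k * (\<Sum>i<k. x^i * y^(k - 1 - i)))"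
proof (cases "x = y")
  case True
  have d: "((\<lambda>x. \<Sum>k\<le>degree p. coeff p k * x^k) has_real_derivative
      (\<Sum>k\<le>degree p. coeff p k * (of_nat k * x^(k-1)))) (at x)"
    by (auto intro!: derivative_eq_intros sum.cong)
  have "poly p = (\<lambda>x. \<Sum>k\<le>degree p. coeff p k * x^k)"
    by (auto simp: poly_altdef fun_eq_iff)
  then have "deriv (poly p) x = (\<Sum>k\<le>degree p. coeff p k * (of_nat k * x^(k-1)))"
    using DERIV_imp_deriv[OF d] by simp
  then show ?thesis using True by (simp add: ddiff_def sum_pow_diag)
next
  case False
  have "poly p x - poly p y = (\<Sum>k\<le>degree p. coeff p k * (x^k - y^k))"
    by (simp add: poly_altdef sum_subtractf[symmetric] algebra_simps)
  also have "\<dots> = (x - y) * (\<Sum>k\<le>degree p. coeff p k * (\<Sum>i<k. x^i * y^(k - 1 - i)))"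
  proof -
    have e: "x^k - y^k = (x - y) * (\<Sum>i<k. x^i * y^(k - 1 - i))" for k
      by (simp add: power_diff_sumr2 mult.commute)
    show ?thesis unfolding e sum_distrib_left by (rule sum.cong) (simp_all add: mult.left_commute)
  qed
  finally show ?thesis using False by (simp add: ddiff_def)
qed

lemma ddiff_poly_mult:
  "ddiff (poly (p * q)) x y = poly p x * ddiff (poly q) x y + poly q y * ddiff (poly p) x y"
proof (cases "x = y")
  case True
  have "deriv (poly (p*q)) x = poly (pderiv (p*q)) x"
    by (simp add: poly_DERIV DERIV_imp_deriv)
  moreover have "deriv (poly p) x = poly (pderiv p) x" "deriv (poly q) x = poly (pderiv q) x"
    by (simp_all add: poly_DERIV DERIV_imp_deriv)
  ultimately show ?thesis using True by (simp add: ddiff_def pderiv_mult algebra_simps)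
next
  case False
  have "(poly p x * poly q x - poly p y * poly q y) = poly p x * (poly q x - poly q y) + poly q y * (poly p x - poly p y)"
    by (simp add: algebra_simps)
  then have "(poly p x * poly q x - poly p y * poly q y)/(x-y) = poly p x * ((poly q x - poly q y)/(x-y)) + poly q y * ((poly p x - poly p y)/(x-y))"
    by (simp add: add_divide_distrib)
  then show ?thesis using False by (simp add: ddiff_def)
qed



lemma cs_AE:
  assumes "sets \<mu> = sets borel" "compact_support \<mu>"
  obtains K where "compact K" "AE x in \<mu>. x \<in> K"
proof -
  from assms(2) obtain K where K: "compact K" "emeasure \<mu> (UNIV - K) = 0"
    unfolding compact_support_def by blast
  have sp: "space \<mu> = UNIV" using sets_eq_imp_space_eq[OF assms(1)] by simp
  have "UNIV - K \<in> sets \<mu>" using assms(1) K(1)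
    by (simp add: compact_imp_closed borel_closed)
  then have "UNIV - K \<in> null_sets \<mu>" using K(2) by (simp add: null_sets_def)
  then have "AE x in \<mu>. x \<in> K" by (rule AE_I') (auto simp: sp)
  then show ?thesis using K(1) that by blast
qed

lemma cont_integrable:
  fixes f :: "'a::topological_space \<Rightarrow> real"
  assumes "finite_measure M" "sets M = sets borel" "AE x in M. x \<in> K" "compact K"
    "continuous_on UNIV f"
  shows "integrable M f"
proof -
  have "compact (f ` K)" using assms(4,5) by (meson compact_continuous_image continuous_on_subset subset_UNIV)
  then obtain B where B: "\<forall>x\<in>K. norm (f x) \<le> B"
    using compact_imp_bounded bounded_iff by (metis image_eqI)
  have m: "f \<in> borel_measurable M"
    using borel_measurable_continuous_onI[OF assms(5)] measurable_cong_sets[OF assms(2) refl] by blast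
  show ?thesis
    using assms(3) B by (intro finite_measure.integrable_const_bound[OF assms(1) _ m, of B]) (auto elim: AE_mp)
qed

lemma pair_AE:
  assumes "prob_space \<mu>" "sets \<mu> = sets borel" "prob_space \<nu>" "sets \<nu> = sets borel"
    "AE x in \<mu>. x \<in> K1" "AE y in \<nu>. y \<in> K2" "compact K1" "compact K2"
  shows "AE z in (\<mu> \<Otimes>\<^sub>M \<nu>). z \<in> (K1 \<times> K2 :: (real\<times>real) set)"
proof -
  interpret pair_prob_space \<mu> \<nu> using assms unfolding pair_prob_space_def pair_sigma_finite_def
    by (auto intro: prob_space_imp_sigma_finite)
  have ss: "sets (\<mu> \<Otimes>\<^sub>M \<nu>) = sets (borel :: (real\<times>real) measure)"
    using sets_pair_measure_cong[OF assms(2) assms(4)] borel_prod by metis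
  have sp: "space (\<mu> \<Otimes>\<^sub>M \<nu>) = UNIV" using sets_eq_imp_space_eq[OF ss] by simp
  have "{z\<in>space (\<mu> \<Otimes>\<^sub>M \<nu>). z \<in> K1 \<times> K2} \<in> sets (\<mu> \<Otimes>\<^sub>M \<nu>)"
    using assms(7,8) by (simp add: sp ss compact_imp_closed borel_closed compact_Times)
  then show ?thesis
  proof (rule AE_pair_measure)
    show "AE x in \<mu>. AE y in \<nu>. (x, y) \<in> K1 \<times> K2"
      using assms(5,6) by (auto elim!: AE_mp)
  qed
qed

lemma pair_integrable:
  fixes f :: "real \<times> real \<Rightarrow> real"
  assumes "prob_space \<mu>" "sets \<mu> = sets borel" "prob_space \<nu>" "sets \<nu> = sets borel"
    "compact_support \<mu>" "compact_support \<nu>" "continuous_on UNIV f"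
  shows "integrable (\<mu> \<Otimes>\<^sub>M \<nu>) f"
proof -
  interpret pair_prob_space \<mu> \<nu> using assms unfolding pair_prob_space_def pair_sigma_finite_def
    by (auto intro: prob_space_imp_sigma_finite)
  obtain K1 where K1: "compact K1" "AE x in \<mu>. x \<in> K1" using cs_AE assms(2,5) by blast
  obtain K2 where K2: "compact K2" "AE x in \<nu>. x \<in> K2" using cs_AE assms(4,6) by blast
  have ss: "sets (\<mu> \<Otimes>\<^sub>M \<nu>) = sets (borel :: (real\<times>real) measure)"
    using sets_pair_measure_cong[OF assms(2) assms(4)] borel_prod by metis
  show ?thesis
    by (rule cont_integrable[OF _ ss pair_AE[OF assms(1-4) K1(2) K2(2) K1(1) K2(1)]])
       (use K1 K2 assms(7) in \<open>auto intro: compact_Times P.finite_measure_axioms\<close>)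
qed

lemma le_one_plus_sq: "(a::real) \<le> 1 + a^2"
proof -
  have "0 \<le> (a - 1)^2" by simp
  then have "2*a \<le> 1 + a^2" by (simp add: power2_diff)
  then show ?thesis using zero_le_power2[of a] by (cases "a \<ge> 0") linarith+
qed

lemma H_integrable:
  fixes q :: "real \<Rightarrow> real"
  assumes "prob_space \<mu>" "sets \<mu> = sets borel" "compact_support \<mu>"
    "H \<in> borel_measurable \<mu>" "integrable \<mu> (\<lambda>x. (H x)\<^sup>2)" "continuous_on UNIV q"
  shows "integrable \<mu> (\<lambda>x. H x * q x)"
proof -
  interpret prob_space \<mu> by fact
  obtain K where K: "compact K" "AE x in \<mu>. x \<in> K" using cs_AE assms(2,3) by blast
  have "compact (q ` K)" using K(1) assms(6) by (meson compact_continuous_image continuous_on_subset subset_UNIV)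
  then obtain B where B: "\<forall>x\<in>K. norm (q x) \<le> B"
    using compact_imp_bounded bounded_iff by (metis image_eqI)
  have mq: "q \<in> borel_measurable \<mu>"
    using borel_measurable_continuous_onI[OF assms(6)] measurable_cong_sets[OF assms(2) refl] by blast
  have i: "integrable \<mu> (\<lambda>x. B * (1 + (H x)\<^sup>2))" using assms(5) by auto
  show ?thesis
  proof (rule Bochner_Integration.integrable_bound[OF i])
    show "(\<lambda>x. H x * q x) \<in> borel_measurable \<mu>" using assms(4) mq by measurable
    show "AE x in \<mu>. norm (H x * q x) \<le> norm (B * (1 + (H x)\<^sup>2))"
      using K(2)
    proof (rule AE_mp, intro AE_I2 impI)
      fix x assume "x \<in> K"
      then have b: "\<bar>q x\<bar> \<le> B" using B by auto
      have h: "\<bar>H x\<bar> \<le> 1 + (H x)\<^sup>2" using le_one_plus_sq[of "\<bar>H x\<bar>"] by simp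
      have "norm (H x * q x) = \<bar>H x\<bar> * \<bar>q x\<bar>" by (simp add: abs_mult)
      also have "\<dots> \<le> (1 + (H x)\<^sup>2) * B" using b h by (intro mult_mono) auto
      also have "\<dots> \<le> norm (B * (1 + (H x)\<^sup>2))" by (simp add: mult.commute)
      finally show "norm (H x * q x) \<le> norm (B * (1 + (H x)\<^sup>2))" .
    qed
  qed
qed



lemma Lop_poly:
  assumes "prob_space \<mu>" "sets \<mu> = sets borel" "compact_support \<mu>"
  shows "\<exists>Q. Lop \<mu> (poly p) = poly Q"
proof -
  interpret prob_space \<mu> by fact
  obtain K where K: "compact K" "AE x in \<mu>. x \<in> K" using cs_AE assms(2,3) by blast
  define M where "M j = (\<integral>y. y^j \<partial>\<mu>)" for j
  have int: "integrable \<mu> (\<lambda>y. x^i * y^j)" for x :: real and i j :: nat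
    by (rule cont_integrable[OF finite_measure_axioms assms(2) K(2) K(1)]) (intro continuous_intros)
  have eq: "Lop \<mu> (poly p) x = (\<Sum>k\<le>degree p. coeff p k * (\<Sum>i<k. x^i * M (k-1-i)))" for x
  proof -
    have "Lop \<mu> (poly p) x = (\<integral>y. (\<Sum>k\<le>degree p. coeff p k * (\<Sum>i<k. x^i * y^(k - 1 - i))) \<partial>\<mu>)"
      by (simp add: Lop_def ddiff_poly)
    also have "\<dots> = (\<Sum>k\<le>degree p. (\<integral>y. coeff p k * (\<Sum>i<k. x^i * y^(k - 1 - i)) \<partial>\<mu>))"
      by (rule Bochner_Integration.integral_sum) (intro integrable_mult_right Bochner_Integration.integrable_sum int)
    also have "\<dots> = (\<Sum>k\<le>degree p. coeff p k * (\<Sum>i<k. x^i * M (k-1-i)))"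
    proof (rule sum.cong[OF refl])
      fix k
      have "(\<integral>y. (\<Sum>i<k. x^i * y^(k - 1 - i)) \<partial>\<mu>) = (\<Sum>i<k. (\<integral>y. x^i * y^(k - 1 - i) \<partial>\<mu>))"
        by (rule Bochner_Integration.integral_sum) (rule int)
      then show "(\<integral>y. coeff p k * (\<Sum>i<k. x^i * y^(k - 1 - i)) \<partial>\<mu>) = coeff p k * (\<Sum>i<k. x^i * M (k-1-i))"
        by (simp add: M_def)
    qed
    finally show ?thesis .
  qed
  define Q where "Q = (\<Sum>k\<le>degree p. \<Sum>i<k. monom (coeff p k * M (k-1-i)) i)"
  have "poly Q x = (\<Sum>k\<le>degree p. coeff p k * (\<Sum>i<k. x^i * M (k-1-i)))" for x
    by (simp add: Q_def poly_sum poly_monom sum_distrib_left mult_ac)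
  then show ?thesis using eq by (intro exI[of _ Q]) auto
qed

lemma ddiff_poly_cont: "continuous_on UNIV (\<lambda>z. ddiff (poly p) (fst z) (snd z))"
  unfolding ddiff_poly by (intro continuous_intros)



lemma ddiff_cont1: "continuous_on UNIV (\<lambda>x. ddiff (poly p) x y)"
  unfolding ddiff_poly by (intro continuous_intros)

lemma key:
  fixes \<mu> \<nu> :: "real measure" and H :: "real \<Rightarrow> real"
  assumes pm: "prob_space \<mu>" and sm: "sets \<mu> = sets borel"
    and pn: "prob_space \<nu>" and sn: "sets \<nu> = sets borel"
    and cm: "compact_support \<mu>" and cn: "compact_support \<nu>"
    and hm: "H \<in> borel_measurable \<mu>" and h2: "integrable \<mu> (\<lambda>x. (H x)\<^sup>2)"
    and hyp: "\<And>f :: real poly. (\<integral>y. (\<integral>x. ddiff (poly f) x y \<partial>\<mu>) \<partial>\<nu>) = (\<integral>x. H x * poly f x \<partial>\<mu>)"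
  shows "(\<integral>x. (Lop \<nu> (Lop \<mu> (poly f)) x - H x * Lop \<mu> (poly f) x) * poly g x \<partial>\<mu>)
        = - (\<integral>x. Lop \<mu> (poly f) x * Lop \<mu> (poly g) x \<partial>\<nu>)"
proof -
  interpret pair_prob_space \<mu> \<nu> using pm pn unfolding pair_prob_space_def pair_sigma_finite_def
    by (auto intro: prob_space_imp_sigma_finite)
  obtain K1 where K1: "compact K1" "AE x in \<mu>. x \<in> K1" using cs_AE sm cm by blast
  obtain K2 where K2: "compact K2" "AE x in \<nu>. x \<in> K2" using cs_AE sn cn by blast
  have intm: "integrable \<mu> q" if "continuous_on UNIV q" for q :: "real \<Rightarrow> real"
    by (rule cont_integrable[OF M1.finite_measure_axioms sm K1(2) K1(1) that])
  have intp: "integrable (\<mu> \<Otimes>\<^sub>M \<nu>) (\<lambda>(x,y). e x y)"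
    if "continuous_on UNIV (\<lambda>z. e (fst z) (snd z))" for e :: "real \<Rightarrow> real \<Rightarrow> real"
  proof -
    have "(\<lambda>(x,y). e x y) = (\<lambda>z. e (fst z) (snd z))" by auto
    then show ?thesis using pair_integrable[OF pm sm pn sn cm cn that] by simp
  qed
  obtain P where P: "Lop \<mu> (poly f) = poly P" using Lop_poly[OF pm sm cm] by blast
  obtain R where R: "Lop \<nu> (poly P) = poly R" using Lop_poly[OF pn sn cn] by blast
  define F where "F = poly P"
  define G where "G = poly g"
  define dF where "dF x y = ddiff (poly P) x y" for x y
  define dg where "dg x y = ddiff (poly g) x y" for x y
  have cF: "continuous_on UNIV (\<lambda>z. dF (fst z) (snd z))"
    unfolding dF_def ddiff_poly by (intro continuous_intros)
  have cg: "continuous_on UNIV (\<lambda>z. dg (fst z) (snd z))"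
    unfolding dg_def ddiff_poly by (intro continuous_intros)
  have cF1: "continuous_on UNIV (\<lambda>x. dF x y)" for y unfolding dF_def by (rule ddiff_cont1)
  have cg1: "continuous_on UNIV (\<lambda>x. dg x y)" for y unfolding dg_def by (rule ddiff_cont1)
  have cPG: "continuous_on UNIV (\<lambda>x. F x * G x)" unfolding F_def G_def by (intro continuous_intros)
  have cF0: "continuous_on UNIV F" unfolding F_def by (intro continuous_intros)
  have cG0: "continuous_on UNIV G" unfolding G_def by (intro continuous_intros)
  have iA: "integrable (\<mu> \<Otimes>\<^sub>M \<nu>) (\<lambda>(x,y). dF x y * G x)"
    by (rule intp) (intro continuous_intros cF continuous_on_compose2[OF cG0] ; simp)
  have iB: "integrable (\<mu> \<Otimes>\<^sub>M \<nu>) (\<lambda>(x,y). F x * dg x y + G y * dF x y)"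
    by (rule intp) (intro continuous_intros cF cg continuous_on_compose2[OF cG0] continuous_on_compose2[OF cF0]; simp)
  have "(\<integral>x. (Lop \<nu> (Lop \<mu> (poly f)) x - H x * Lop \<mu> (poly f) x) * poly g x \<partial>\<mu>)
      = (\<integral>x. poly R x * G x - H x * (F x * G x) \<partial>\<mu>)"
    unfolding P R F_def G_def by (simp add: algebra_simps)
  also have "\<dots> = (\<integral>x. poly R x * G x \<partial>\<mu>) - (\<integral>x. H x * (F x * G x) \<partial>\<mu>)"
    by (rule Bochner_Integration.integral_diff[OF intm H_integrable[OF pm sm cm hm h2 cPG]]) (unfold G_def, intro continuous_intros)
  also have "(\<integral>x. poly R x * G x \<partial>\<mu>) = (\<integral>x. (\<integral>y. dF x y * G x \<partial>\<nu>) \<partial>\<mu>)"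
    by (simp add: R[symmetric] Lop_def dF_def)
  also have "\<dots> = (\<integral>y. (\<integral>x. dF x y * G x \<partial>\<mu>) \<partial>\<nu>)"
    using Fubini_integral[OF iA] by simp
  also have "(\<integral>x. H x * (F x * G x) \<partial>\<mu>) = (\<integral>y. (\<integral>x. F x * dg x y + G y * dF x y \<partial>\<mu>) \<partial>\<nu>)"
    using hyp[of "P * g"] by (simp add: F_def G_def dF_def dg_def ddiff_poly_mult)
  also have "(\<integral>y. (\<integral>x. dF x y * G x \<partial>\<mu>) \<partial>\<nu>) - (\<integral>y. (\<integral>x. F x * dg x y + G y * dF x y \<partial>\<mu>) \<partial>\<nu>)
      = (\<integral>y. (\<integral>x. dF x y * G x \<partial>\<mu>) - (\<integral>x. F x * dg x y + G y * dF x y \<partial>\<mu>) \<partial>\<nu>)"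
    by (rule Bochner_Integration.integral_diff[symmetric]) (rule integrable_snd[OF iA], rule integrable_snd[OF iB])
  also have "\<dots> = (\<integral>y. - (F y * Lop \<mu> (poly g) y) \<partial>\<nu>)"
  proof (rule Bochner_Integration.integral_cong[OF refl])
    fix y
    have i1: "integrable \<mu> (\<lambda>x. dF x y * G x)"
      by (rule intm) (intro continuous_intros cF1 cG0)
    have i2: "integrable \<mu> (\<lambda>x. F x * dg x y + G y * dF x y)"
      by (rule intm) (intro continuous_intros cF1 cg1 cF0)
    have "(\<integral>x. dF x y * G x \<partial>\<mu>) - (\<integral>x. F x * dg x y + G y * dF x y \<partial>\<mu>)
        = (\<integral>x. dF x y * G x - (F x * dg x y + G y * dF x y) \<partial>\<mu>)"
      by (rule Bochner_Integration.integral_diff[OF i1 i2, symmetric])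
    also have "\<dots> = (\<integral>x. - (F y * dg y x) \<partial>\<mu>)"
    proof (rule Bochner_Integration.integral_cong[OF refl])
      fix x
      have "dF x y * (G x - G y) = (F x - F y) * dg x y"
        unfolding dF_def dg_def F_def G_def by (rule ddiff_cross)
      moreover have "dg y x = dg x y" unfolding dg_def by (rule ddiff_sym)
      ultimately show "dF x y * G x - (F x * dg x y + G y * dF x y) = - (F y * dg y x)"
        by (simp add: algebra_simps)
    qed
    also have "\<dots> = - (F y * Lop \<mu> (poly g) y)"
      by (simp add: Lop_def dg_def)
    finally show "(\<integral>x. dF x y * G x \<partial>\<mu>) - (\<integral>x. F x * dg x y + G y * dF x y \<partial>\<mu>) = - (F y * Lop \<mu> (poly g) y)" .
  qed
  also have "\<dots> = - (\<integral>x. Lop \<mu> (poly f) x * Lop \<mu> (poly g) x \<partial>\<nu>)"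
    by (simp add: F_def P)
  finally show ?thesis .
qed


theorem lemma4p1:
  fixes \<mu> \<nu> :: "real measure" and H :: "real \<Rightarrow> real"
  assumes "prob_space \<mu>" "sets \<mu> = sets borel"
    and "prob_space \<nu>" "sets \<nu> = sets borel"
    and "compact_support \<mu>" "compact_support \<nu>"
    and "H \<in> borel_measurable \<mu>" "integrable \<mu> (\<lambda>x. (H x)\<^sup>2)"
    and "\<And>f :: real poly. (\<integral>y. (\<integral>x. ddiff (poly f) x y \<partial>\<mu>) \<partial>\<nu>) = (\<integral>x. H x * poly f x \<partial>\<mu>)"
  shows "\<forall>f g :: real poly.
      (\<integral>x. (Lop \<nu> (Lop \<mu> (poly f)) x - H x * Lop \<mu> (poly f) x) * poly g x \<partial>\<mu>)
        = - (\<integral>x. Lop \<mu> (poly f) x * Lop \<mu> (poly g) x \<partial>\<nu>)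
    \<and> (\<integral>x. (Lop \<nu> (Lop \<mu> (poly f)) x - H x * Lop \<mu> (poly f) x) * poly g x \<partial>\<mu>)
        = (\<integral>x. poly f x * (Lop \<nu> (Lop \<mu> (poly g)) x - H x * Lop \<mu> (poly g) x) \<partial>\<mu>)"
proof (intro allI conjI)
  fix f g :: "real poly"
  note k = key[OF assms]
  show "(\<integral>x. (Lop \<nu> (Lop \<mu> (poly f)) x - H x * Lop \<mu> (poly f) x) * poly g x \<partial>\<mu>)
        = - (\<integral>x. Lop \<mu> (poly f) x * Lop \<mu> (poly g) x \<partial>\<nu>)" by (rule k)
  have "(\<integral>x. (Lop \<nu> (Lop \<mu> (poly f)) x - H x * Lop \<mu> (poly f) x) * poly g x \<partial>\<mu>)
        = (\<integral>x. (Lop \<nu> (Lop \<mu> (poly g)) x - H x * Lop \<mu> (poly g) x) * poly f x \<partial>\<mu>)"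
    unfolding k by (simp add: mult.commute)
  then show "(\<integral>x. (Lop \<nu> (Lop \<mu> (poly f)) x - H x * Lop \<mu> (poly f) x) * poly g x \<partial>\<mu>)
        = (\<integral>x. poly f x * (Lop \<nu> (Lop \<mu> (poly g)) x - H x * Lop \<mu> (poly g) x) \<partial>\<mu>)"
    by (simp add: mult.commute)
qed

end
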